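(* Let $V$ be a vector space over a field $F$ and let $n\ge 2$. If a widget with $n$ pairs in $V$ contains a legal subwidget, then the widget itself is legal.
   Context: A widget with $n$ pairs in $V$ is an indexed family of $n$ pairs of vectors $p_j=(p_j^+,p_j^-)$, $j=1,\dots,n$, in $V$. A section of a widget is a set of points containing at most one point from each pair. A widget with $n$ pairs is legal if every section spans a linear subspace of $V$ of dimension at most $n-1$. A subwidget of a widget with $n$ pairs is the widget formed by some $k$ of its pairs with $1\le k<n$; it is itself a widget with $k$ pairs, so it is legal if every one of its sections spans a subspace of dimension at most $k-1$. *)

theory Defs
  imports Complex_Main
begin

text \<open>A widget in the vector space given by the scalar multiplication scale
  is an indexed family of pairs p j = (p_j^+, p_j^-), j ranging over a finite
  index set I (the widget has card I pairs).\<close>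

definition widget_pair :: "(nat \<Rightarrow> 'b \<times> 'b) \<Rightarrow> nat \<Rightarrow> 'b set" where
  "widget_pair p j = {fst (p j), snd (p j)}"

definition widget_section :: "nat set \<Rightarrow> (nat \<Rightarrow> 'b \<times> 'b) \<Rightarrow> 'b set \<Rightarrow> bool" where
  "widget_section I p S \<longleftrightarrow>
     S \<subseteq> (\<Union>j\<in>I. widget_pair p j) \<and> (\<forall>j\<in>I. card (S \<inter> widget_pair p j) \<le> 1)"

definition widget_legal ::
  "('a::field \<Rightarrow> 'b::ab_group_add \<Rightarrow> 'b) \<Rightarrow> nat set \<Rightarrow> (nat \<Rightarrow> 'b \<times> 'b) \<Rightarrow> bool" where
  "widget_legal scale I p \<longleftrightarrow>
     (\<forall>S. widget_section I p S \<longrightarrow>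
        vector_space.dim scale (module.span scale S) \<le> card I - 1)"

end

theory Submission
  imports Defs
begin

context vector_space begin
lemma dim_union_le_aux:
  assumes "finite A" "finite T"
  shows "dim (A \<union> T) \<le> dim A + card T"
proof -
  obtain B where B: "B \<subseteq> A" "independent B" "A \<subseteq> span B" "card B = dim A"
    using basis_exists[of A] by blast
  have fB: "finite B" using B(1) assms(1) finite_subset by blast
  have "A \<union> T \<subseteq> span (B \<union> T)"
    using B(3) span_mono[of B "B \<union> T"] span_superset[of "B \<union> T"] by blast
  then have "dim (A \<union> T) \<le> card (B \<union> T)"
    using dim_le_card fB assms(2) by blast
  also have "\<dots> \<le> card B + card T" by (rule card_Un_le)
  finally show ?thesis using B(4) by simp
qed
end

theorem mainTheorem6:
  fixes scale :: "'a::field \<Rightarrow> 'b::ab_group_add \<Rightarrow> 'b"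
    and n :: nat and p :: "nat \<Rightarrow> 'b \<times> 'b" and K :: "nat set"
  assumes "vector_space scale"
    and "n \<ge> 2"
    and "K \<subseteq> {1..n}" and "1 \<le> card K" and "card K < n"
    and "widget_legal scale K p"
  shows "widget_legal scale {1..n} p"
  unfolding widget_legal_def
proof (intro allI impI)
  interpret vs: vector_space scale by (rule assms(1))
  fix S assume sec: "widget_section {1..n} p S"
  have fp: "finite (widget_pair p j)" for j by (simp add: widget_pair_def)
  have fS: "finite S" using sec fp unfolding widget_section_def
    by (meson finite_UN_I finite_atLeastAtMost finite_subset)
  define SK where "SK = S \<inter> (\<Union>j\<in>K. widget_pair p j)"
  define T where "T = S - SK"
  have secK: "widget_section K p SK"
    unfolding widget_section_def
  proof (intro conjI ballI)
    show "SK \<subseteq> (\<Union>j\<in>K. widget_pair p j)" unfolding SK_def by blast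
    fix j assume j: "j \<in> K"
    have "card (SK \<inter> widget_pair p j) \<le> card (S \<inter> widget_pair p j)"
      by (rule card_mono) (auto simp: SK_def fp)
    also have "\<dots> \<le> 1" using sec j assms(3) unfolding widget_section_def by blast
    finally show "card (SK \<inter> widget_pair p j) \<le> 1" .
  qed
  have dK: "vs.dim SK \<le> card K - 1"
    using assms(6) secK unfolding widget_legal_def by (metis vs.dim_span)
  have fK: "finite K" using assms(3) finite_subset by blast
  have TU: "T \<subseteq> (\<Union>j\<in>{1..n} - K. S \<inter> widget_pair p j)"
    using sec unfolding T_def SK_def widget_section_def by blast
  have "card T \<le> card (\<Union>j\<in>{1..n} - K. S \<inter> widget_pair p j)"
    by (rule card_mono[OF _ TU]) (simp add: fp)
  also have "\<dots> \<le> (\<Sum>j\<in>{1..n} - K. card (S \<inter> widget_pair p j))"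
    by (rule card_UN_le) simp
  also have "\<dots> \<le> (\<Sum>j\<in>{1..n} - K. 1)"
    by (rule sum_mono) (use sec in \<open>auto simp: widget_section_def\<close>)
  also have "\<dots> = n - card K"
    using assms(3) fK by (simp add: card_Diff_subset)
  finally have cT: "card T \<le> n - card K" .
  have "S = SK \<union> T" unfolding T_def SK_def by blast
  then have "vs.dim S \<le> vs.dim SK + card T"
    using vs.dim_union_le_aux[of SK T] fS unfolding T_def SK_def by auto
  then have "vs.dim S \<le> n - 1" using dK cT assms(4,5) by linarith
  then show "vs.dim (vs.span S) \<le> card {1..n} - 1" by simp
qed

end
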